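(* Let $(X,T)$ be a transitive topological dynamical system such that $\operatorname{supp}(X,T)\ne\mathrm{Fix}(X,T^n)$ for every $n\in\mathbb{N}$. Then for every $x\in X$ the Banach proximal cell $BP(x)=\{y\in X:(x,y)\text{ is Banach proximal}\}$ has empty interior.
   Context: A topological dynamical system $(X,T)$ consists of a non-empty compact metric space $(X,d)$ and a continuous map $T:X\to X$. It is transitive if for all non-empty open $U,V\subset X$ the set $\{n\ge0: U\cap T^{-n}V\ne\emptyset\}$ is infinite. $\mathrm{Fix}(X,T^n)=\{x\in X: T^nx=x\}$. A set $F\subset\mathbb{Z}_+$ has Banach density one if for every $\lambda<1$ there is $N\ge1$ with $\#(F\cap I)\ge\lambda\,\#(I)$ for every interval of integers $I\subset\mathbb{Z}_+$ with $\#(I)\ge N$. A pair $(x,y)$ is Banach proximal if for every $\varepsilon>0$ the set $\{n\in\mathbb{Z}_+: d(T^nx,T^ny)<\varepsilon\}$ has Banach density one. $\operatorname{supp}(X,T)$ is the smallest closed set $C\subset X$ with $\mu(C)=1$ for all $T$-invariant Borel probability measures $\mu$. *)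

theory Defs
  imports "HOL-Probability.Probability"
begin

definition tds :: "'a::metric_space set \<Rightarrow> ('a \<Rightarrow> 'a) \<Rightarrow> bool" where
  "tds X T \<longleftrightarrow> X \<noteq> {} \<and> compact X \<and> continuous_on X T \<and> T ` X \<subseteq> X"

definition transitive_sys :: "'a::metric_space set \<Rightarrow> ('a \<Rightarrow> 'a) \<Rightarrow> bool" where
  "transitive_sys X T \<longleftrightarrow>
     (\<forall>U V. openin (top_of_set X) U \<and> U \<noteq> {} \<and> openin (top_of_set X) V \<and> V \<noteq> {} \<longrightarrow>
        infinite {n::nat. U \<inter> {x \<in> X. (T ^^ n) x \<in> V} \<noteq> {}})"

definition Fix :: "'a set \<Rightarrow> ('a \<Rightarrow> 'a) \<Rightarrow> nat \<Rightarrow> 'a set" where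
  "Fix X T n = {x \<in> X. (T ^^ n) x = x}"

definition invariant_measure :: "'a::metric_space set \<Rightarrow> ('a \<Rightarrow> 'a) \<Rightarrow> 'a measure \<Rightarrow> bool" where
  "invariant_measure X T \<mu> \<longleftrightarrow>
     prob_space \<mu> \<and> sets \<mu> = sets (restrict_space borel X) \<and> T \<in> measurable \<mu> \<mu> \<and>
     (\<forall>A \<in> sets \<mu>. emeasure \<mu> (T -` A \<inter> space \<mu>) = emeasure \<mu> A)"

text \<open>The support: the smallest closed set of full measure for every invariant measure,
realised as the intersection of all such closed sets.\<close>
definition supp :: "'a::metric_space set \<Rightarrow> ('a \<Rightarrow> 'a) \<Rightarrow> 'a set" where
  "supp X T = \<Inter> {C. closed C \<and> C \<subseteq> X \<and>
       (\<forall>\<mu>. invariant_measure X T \<mu> \<longrightarrow> emeasure \<mu> C = 1)}"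

definition banach_density_one :: "nat set \<Rightarrow> bool" where
  "banach_density_one F \<longleftrightarrow>
     (\<forall>l::real. l < 1 \<longrightarrow> (\<exists>N\<ge>1. \<forall>a b::nat. a \<le> b \<and> card {a..b} \<ge> N \<longrightarrow>
        real (card (F \<inter> {a..b})) \<ge> l * real (card {a..b})))"

definition banach_proximal :: "('a::metric_space \<Rightarrow> 'a) \<Rightarrow> 'a \<Rightarrow> 'a \<Rightarrow> bool" where
  "banach_proximal T x y \<longleftrightarrow>
     (\<forall>\<epsilon>>0. banach_density_one {n. dist ((T ^^ n) x) ((T ^^ n) y) < \<epsilon>})"

definition BP :: "'a::metric_space set \<Rightarrow> ('a \<Rightarrow> 'a) \<Rightarrow> 'a \<Rightarrow> 'a set" where
  "BP X T x = {y \<in> X. banach_proximal T x y}"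

end

theory Submission
  imports Defs "HOL-Analysis.Analysis"
begin

lemma bdo_mono:
  assumes "banach_density_one F" "F \<subseteq> G"
  shows "banach_density_one G"
  unfolding banach_density_one_def
proof (intro allI impI)
  fix l :: real assume "l < 1"
  then obtain N where N: "N \<ge> 1" "\<forall>a b::nat. a \<le> b \<and> card {a..b} \<ge> N \<longrightarrow>
        real (card (F \<inter> {a..b})) \<ge> l * real (card {a..b})"
    using assms(1) unfolding banach_density_one_def by blast
  show "\<exists>N\<ge>1. \<forall>a b::nat. a \<le> b \<and> card {a..b} \<ge> N \<longrightarrow>
        real (card (G \<inter> {a..b})) \<ge> l * real (card {a..b})"
  proof (intro exI[of _ N] conjI allI impI)
    fix a b :: nat assume h: "a \<le> b \<and> card {a..b} \<ge> N"
    have "card (F \<inter> {a..b}) \<le> card (G \<inter> {a..b})"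
      by (rule card_mono) (use assms(2) in auto)
    moreover have "real (card (F \<inter> {a..b})) \<ge> l * real (card {a..b})"
      using N(2) h by blast
    ultimately show "real (card (G \<inter> {a..b})) \<ge> l * real (card {a..b})"
      using of_nat_le_iff[of "card (F \<inter> {a..b})" "card (G \<inter> {a..b})"] by linarith
  qed (use N in auto)
qed

lemma bdo_Int:
  assumes "banach_density_one F" "banach_density_one G"
  shows "banach_density_one (F \<inter> G)"
  unfolding banach_density_one_def
proof (intro allI impI)
  fix l :: real assume "l < 1"
  define l' where "l' = (1 + l) / 2"
  have "l' < 1" using \<open>l < 1\<close> by (simp add: l'_def)
  obtain N1 where N1: "N1 \<ge> 1" "\<forall>a b::nat. a \<le> b \<and> card {a..b} \<ge> N1 \<longrightarrow>
        real (card (F \<inter> {a..b})) \<ge> l' * real (card {a..b})"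
    using assms(1) \<open>l' < 1\<close> unfolding banach_density_one_def by blast
  obtain N2 where N2: "N2 \<ge> 1" "\<forall>a b::nat. a \<le> b \<and> card {a..b} \<ge> N2 \<longrightarrow>
        real (card (G \<inter> {a..b})) \<ge> l' * real (card {a..b})"
    using assms(2) \<open>l' < 1\<close> unfolding banach_density_one_def by blast
  show "\<exists>N\<ge>1. \<forall>a b::nat. a \<le> b \<and> card {a..b} \<ge> N \<longrightarrow>
        real (card (F \<inter> G \<inter> {a..b})) \<ge> l * real (card {a..b})"
  proof (intro exI[of _ "max N1 N2"] conjI allI impI)
    fix a b :: nat assume h: "a \<le> b \<and> card {a..b} \<ge> max N1 N2"
    have f: "real (card (F \<inter> {a..b})) \<ge> l' * real (card {a..b})" using N1(2) h by auto
    have g: "real (card (G \<inter> {a..b})) \<ge> l' * real (card {a..b})" using N2(2) h by auto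
    have "card (F \<inter> {a..b}) + card (G \<inter> {a..b}) = card ((F \<inter> {a..b}) \<union> (G \<inter> {a..b})) + card ((F \<inter> {a..b}) \<inter> (G \<inter> {a..b}))"
      by (rule card_Un_Int) auto
    moreover have "card ((F \<inter> {a..b}) \<union> (G \<inter> {a..b})) \<le> card {a..b}"
      by (rule card_mono) auto
    moreover have "card ((F \<inter> {a..b}) \<inter> (G \<inter> {a..b})) = card (F \<inter> G \<inter> {a..b})"
      by (rule arg_cong[where f=card]) auto
    ultimately have "card (F \<inter> {a..b}) + card (G \<inter> {a..b}) \<le> card {a..b} + card (F \<inter> G \<inter> {a..b})"
      by linarith
    then have "real (card (F \<inter> {a..b})) + real (card (G \<inter> {a..b})) \<le> real (card {a..b}) + real (card (F \<inter> G \<inter> {a..b}))"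
      by (metis of_nat_add of_nat_le_iff)
    moreover have "l * real (card {a..b}) = 2 * (l' * real (card {a..b})) - real (card {a..b})"
      unfolding l'_def by (simp add: algebra_simps)
    ultimately show "real (card (F \<inter> G \<inter> {a..b})) \<ge> l * real (card {a..b})"
      using f g by linarith
  qed (use N1 in auto)
qed

lemma bp_trans:
  assumes "banach_proximal T x y" "banach_proximal T x z"
  shows "banach_proximal T y z"
  unfolding banach_proximal_def
proof (intro allI impI)
  fix e :: real assume "e > 0"
  have h2: "e/2 > 0" using \<open>e > 0\<close> by simp
  have "banach_density_one ({n. dist ((T ^^ n) x) ((T ^^ n) y) < e/2} \<inter> {n. dist ((T ^^ n) x) ((T ^^ n) z) < e/2})"
    apply (rule bdo_Int)
    using assms h2 unfolding banach_proximal_def by blast+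
  then show "banach_density_one {n. dist ((T ^^ n) y) ((T ^^ n) z) < e}"
    by (rule bdo_mono) (auto intro: dist_triangle_half_r)
qed

lemma funpow_in: "T ` X \<subseteq> X \<Longrightarrow> x \<in> X \<Longrightarrow> (T ^^ n) x \<in> X"
  by (induction n) auto

lemma funpow_cont: "continuous_on X T \<Longrightarrow> T ` X \<subseteq> X \<Longrightarrow> continuous_on X (T ^^ n)"
proof (induction n)
  case 0 then show ?case by (simp add: continuous_on_id)
next
  case (Suc n)
  have "continuous_on X (T \<circ> (T ^^ n))"
  proof (rule continuous_on_compose)
    show "continuous_on X (T ^^ n)" using Suc by blast
    have "(T ^^ n) ` X \<subseteq> X" using funpow_in[OF Suc.prems(2)] by blast
    then show "continuous_on ((T ^^ n) ` X) T" using Suc.prems(1) by (rule continuous_on_subset[rotated])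
  qed
  then show ?case by simp
qed

lemma funpow_comp': "(T ^^ m) ((T ^^ n) x) = (T ^^ (m + n)) x"
  by (simp add: funpow_add)

lemma dense_orbit:
  fixes X :: "'a::metric_space set"
  assumes "tds X T" "transitive_sys X T" "openin (top_of_set X) W" "W \<noteq> {}"
  shows "\<exists>w\<in>W. \<forall>z\<in>X. \<forall>d>0. \<exists>n. dist ((T ^^ n) w) z < d"
proof -
  have cX: "compact X" and cT: "continuous_on X T" and TX: "T ` X \<subseteq> X"
    using assms(1) unfolding tds_def by auto
  have "\<forall>j. \<exists>k. finite k \<and> k \<subseteq> X \<and> X \<subseteq> (\<Union>x\<in>k. ball x (inverse (Suc j)))"
    using seq_compact_imp_totally_bounded[OF compact_imp_seq_compact[OF cX]] by simp
  then obtain F where F: "\<And>j. finite (F j) \<and> F j \<subseteq> X \<and> X \<subseteq> (\<Union>x\<in>F j. ball x (inverse (Suc j)))"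
    by metis
  define Orb where "Orb c r = X \<inter> (\<Union>n. (T ^^ n) -` ball c r)" for c r
  define G where "G = (\<lambda>(j,c). Orb c (inverse (Suc j))) ` (SIGMA j:UNIV. F j)"
  have cG: "countable G" unfolding G_def
    using F by (intro countable_image countable_SIGMA) (auto intro: countable_finite)
  have Gprop: "openin (top_of_set X) S \<and> (top_of_set X) closure_of S = topspace (top_of_set X)" if "S \<in> G" for S
  proof -
    obtain j c where S: "S = Orb c (inverse (Suc j))" and c: "c \<in> F j"
      using \<open>S \<in> G\<close> unfolding G_def by auto
    define r where "r = inverse (real (Suc j))"
    have r: "r > 0" unfolding r_def by simp
    have S': "S = (\<Union>n. X \<inter> (T ^^ n) -` ball c r)" unfolding S Orb_def r_def by auto
    have op: "openin (top_of_set X) S" unfolding S'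
      by (intro openin_Union) (auto intro!: continuous_openin_preimage_gen funpow_cont cT TX)
    have "S \<inter> U' \<noteq> {}" if U': "openin (top_of_set X) U'" "U' \<noteq> {}" for U'
    proof -
      have cX': "c \<in> X" using c F by auto
      have V: "openin (top_of_set X) (X \<inter> ball c r)" "X \<inter> ball c r \<noteq> {}"
        using cX' r by (auto simp: openin_open_Int)
      have "infinite {n::nat. U' \<inter> {x \<in> X. (T ^^ n) x \<in> X \<inter> ball c r} \<noteq> {}}"
        using assms(2) U' V unfolding transitive_sys_def by blast
      then obtain n where "U' \<inter> {x \<in> X. (T ^^ n) x \<in> X \<inter> ball c r} \<noteq> {}"
        using not_finite_existsD by blast
      then obtain y where "y \<in> U'" "y \<in> X" "(T ^^ n) y \<in> ball c r" by blast
      then have "y \<in> S \<inter> U'" unfolding S' by auto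
      then show ?thesis by blast
    qed
    then have "(top_of_set X) closure_of S = topspace (top_of_set X)"
      unfolding dense_intersects_open by blast
    then show ?thesis using op by blast
  qed
  have sp: "locally_compact_space (top_of_set X) \<and> regular_space (top_of_set X)"
    using cX by (auto intro!: compact_imp_locally_compact_space compact_space_subtopology
        metrizable_imp_regular_space metrizable_space_subtopology metrizable_space_euclidean)
  have "(top_of_set X) closure_of \<Inter>G = topspace (top_of_set X)"
    by (rule Baire_category) (use sp cG Gprop in auto)
  then have "\<Inter>G \<inter> W \<noteq> {}"
    using assms(3,4) unfolding dense_intersects_open by blast
  then obtain w where w: "w \<in> W" "\<And>S. S \<in> G \<Longrightarrow> w \<in> S" by blast
  show ?thesis
  proof (intro bexI[OF _ w(1)] ballI allI impI)
    fix z d assume z: "z \<in> X" and d: "(d::real) > 0"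
    obtain j where j: "inverse (real (Suc j)) < d/2"
      using reals_Archimedean[of "d/2"] d by auto
    obtain c where c: "c \<in> F j" "z \<in> ball c (inverse (Suc j))" using F z by blast
    have "Orb c (inverse (Suc j)) \<in> G" unfolding G_def using c by auto
    then have "w \<in> Orb c (inverse (Suc j))" using w by blast
    then obtain n where "(T ^^ n) w \<in> ball c (inverse (Suc j))" unfolding Orb_def by auto
    then have "dist ((T ^^ n) w) z < d"
    proof -
      assume a: "(T ^^ n) w \<in> ball c (inverse (Suc j))"
      have "dist ((T ^^ n) w) z \<le> dist c ((T ^^ n) w) + dist c z"
        by (rule dist_triangle3)
      then show ?thesis using a c(2) j by (simp add: mem_ball)
    qed
    then show "\<exists>n. dist ((T ^^ n) w) z < d" by blast
  qed
qed

lemma uniform_bp: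
  fixes X :: "'a::metric_space set"
  assumes "tds X T" "w \<in> X" and dense: "\<forall>z\<in>X. \<forall>d>0. \<exists>n. dist ((T ^^ n) w) z < d"
    and bp: "banach_proximal T w ((T ^^ k) w)" and e: "e > 0" and l: "l < 1"
  shows "\<exists>N\<ge>1. \<forall>z\<in>X. \<forall>a b. a \<le> b \<and> card {a..b} \<ge> N \<longrightarrow>
     real (card ({n. dist ((T ^^ n) z) ((T ^^ n) ((T ^^ k) z)) < e} \<inter> {a..b})) \<ge> l * real (card {a..b})"
proof -
  have cT: "continuous_on X T" and TX: "T ` X \<subseteq> X"
    using assms(1) unfolding tds_def by auto
  define Fw where "Fw = {n. dist ((T ^^ n) w) ((T ^^ n) ((T ^^ k) w)) < e/2}"
  have e2: "e/2 > 0" using e by simp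
  have "banach_density_one Fw" using bp e2 unfolding banach_proximal_def Fw_def by blast
  then obtain N where N: "N \<ge> 1" "\<forall>a b::nat. a \<le> b \<and> card {a..b} \<ge> N \<longrightarrow>
        real (card (Fw \<inter> {a..b})) \<ge> l * real (card {a..b})"
    using l unfolding banach_density_one_def by blast
  show ?thesis
  proof (intro exI[of _ N] conjI ballI allI impI)
    fix z and a b :: nat assume z: "z \<in> X" and ab: "a \<le> b \<and> card {a..b} \<ge> N"
    define Sz where "Sz = {n. dist ((T ^^ n) z) ((T ^^ n) ((T ^^ k) z)) < e}"
    have e4: "e/4 > 0" using e by simp
    have "\<forall>n\<in>{a..b}. eventually (\<lambda>y. dist ((T ^^ n) y) ((T ^^ n) z) < e/4 \<and>
        dist ((T ^^ (n + k)) y) ((T ^^ (n + k)) z) < e/4) (at z within X)"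
    proof
      fix n
      have c1: "((T ^^ n) \<longlongrightarrow> (T ^^ n) z) (at z within X)"
        using funpow_cont[OF cT TX, of n] z unfolding continuous_on_def by blast
      have c2: "((T ^^ (n+k)) \<longlongrightarrow> (T ^^ (n+k)) z) (at z within X)"
        using funpow_cont[OF cT TX, of "n+k"] z unfolding continuous_on_def by blast
      show "eventually (\<lambda>y. dist ((T ^^ n) y) ((T ^^ n) z) < e/4 \<and>
        dist ((T ^^ (n + k)) y) ((T ^^ (n + k)) z) < e/4) (at z within X)"
        using tendstoD[OF c1 e4] tendstoD[OF c2 e4] by (rule eventually_conj)
    qed
    then have "eventually (\<lambda>y. \<forall>n\<in>{a..b}. dist ((T ^^ n) y) ((T ^^ n) z) < e/4 \<and>
        dist ((T ^^ (n + k)) y) ((T ^^ (n + k)) z) < e/4) (at z within X)"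
      by (rule eventually_ball_finite[rotated]) simp
    then obtain d where d: "d > 0" "\<forall>y\<in>X. y \<noteq> z \<and> dist y z < d \<longrightarrow> (\<forall>n\<in>{a..b}. dist ((T ^^ n) y) ((T ^^ n) z) < e/4 \<and>
        dist ((T ^^ (n + k)) y) ((T ^^ (n + k)) z) < e/4)"
      unfolding eventually_at by blast
    obtain m where m: "dist ((T ^^ m) w) z < d" using dense z d(1) by blast
    define y where "y = (T ^^ m) w"
    have yX: "y \<in> X" unfolding y_def using funpow_in[OF TX assms(2)] .
    have close: "\<forall>n\<in>{a..b}. dist ((T ^^ n) y) ((T ^^ n) z) < e/4 \<and>
        dist ((T ^^ (n + k)) y) ((T ^^ (n + k)) z) < e/4"
    proof (cases "y = z")
      case True then show ?thesis using e by simp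
    next
      case False then show ?thesis using d(2) yX m unfolding y_def by blast
    qed
    have sub: "{n\<in>{a..b}. n + m \<in> Fw} \<subseteq> Sz \<inter> {a..b}"
    proof
      fix n assume n: "n \<in> {n\<in>{a..b}. n + m \<in> Fw}"
      then have h: "dist ((T ^^ (n+m)) w) ((T ^^ (n+m+k)) w) < e/2"
        unfolding Fw_def by (simp add: funpow_comp')
      have e1: "(T ^^ n) y = (T ^^ (n+m)) w" unfolding y_def by (simp add: funpow_comp')
      have e2: "(T ^^ (n+k)) y = (T ^^ (n+m+k)) w" unfolding y_def by (simp add: funpow_comp' add_ac)
      have cl: "dist ((T ^^ n) y) ((T ^^ n) z) < e/4" "dist ((T ^^ (n + k)) y) ((T ^^ (n + k)) z) < e/4"
        using close n by auto
      have t1: "dist ((T ^^ n) z) ((T ^^ (n+k)) z) \<le> dist ((T ^^ n) z) ((T ^^ n) y) + dist ((T ^^ n) y) ((T ^^ (n+k)) z)"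
        by (rule dist_triangle)
      have t2: "dist ((T ^^ n) y) ((T ^^ (n+k)) z) \<le> dist ((T ^^ n) y) ((T ^^ (n+k)) y) + dist ((T ^^ (n+k)) y) ((T ^^ (n+k)) z)"
        by (rule dist_triangle)
      have "dist ((T ^^ n) z) ((T ^^ (n+k)) z) \<le> dist ((T ^^ n) z) ((T ^^ n) y) + dist ((T ^^ n) y) ((T ^^ (n+k)) y) + dist ((T ^^ (n+k)) y) ((T ^^ (n+k)) z)"
        using t1 t2 by linarith
      then have "dist ((T ^^ n) z) ((T ^^ (n+k)) z) < e"
        using cl h e1 e2 by (simp add: dist_commute)
      then show "n \<in> Sz \<inter> {a..b}" using n unfolding Sz_def by (simp add: funpow_comp')
    qed
    have img: "(\<lambda>n. n + m) ` {n\<in>{a..b}. n + m \<in> Fw} = Fw \<inter> {a+m..b+m}"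
    proof (rule set_eqI, rule iffI)
      fix x assume "x \<in> Fw \<inter> {a+m..b+m}"
      then show "x \<in> (\<lambda>n. n + m) ` {n\<in>{a..b}. n + m \<in> Fw}"
        by (intro image_eqI[of _ _ "x - m"]) auto
    qed auto
    have "card {n\<in>{a..b}. n + m \<in> Fw} = card (Fw \<inter> {a+m..b+m})"
      by (subst img[symmetric], rule card_image[symmetric]) (auto simp: inj_on_def)
    moreover have "a+m \<le> b+m \<and> card {a+m..b+m} \<ge> N" using ab by simp
    then have "real (card (Fw \<inter> {a+m..b+m})) \<ge> l * real (card {a+m..b+m})"
      using N(2) by blast
    moreover have "card {a+m..b+m} = card {a..b}" by simp
    moreover have "card {n\<in>{a..b}. n + m \<in> Fw} \<le> card (Sz \<inter> {a..b})"
      by (rule card_mono[OF _ sub]) simp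
    ultimately have "real (card (Sz \<inter> {a..b})) \<ge> l * real (card {a..b})"
      using of_nat_le_iff[of "card {n\<in>{a..b}. n + m \<in> Fw}" "card (Sz \<inter> {a..b})"] by simp
    then show "real (card ({n. dist ((T ^^ n) z) ((T ^^ n) ((T ^^ k) z)) < e} \<inter> {a..b})) \<ge> l * real (card {a..b})"
      unfolding Sz_def .
  qed (use N in auto)
qed

lemma inv_space:
  assumes "invariant_measure X T \<mu>"
  shows "space \<mu> = X"
proof -
  have "sets \<mu> = sets (restrict_space borel X)" using assms unfolding invariant_measure_def by auto
  then have "space \<mu> = space (restrict_space borel X)" by (rule sets_eq_imp_space_eq)
  then show ?thesis by (simp add: space_restrict_space)
qed

lemma closed_in_sets:
  assumes "invariant_measure X T \<mu>" "closed C" "C \<subseteq> X"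
  shows "C \<in> sets \<mu>"
proof -
  have "sets \<mu> = sets (restrict_space borel X)" using assms unfolding invariant_measure_def by auto
  moreover have "C = X \<inter> C" using assms by auto
  moreover have "C \<in> sets borel" using assms(2) by (rule borel_closed)
  ultimately have "C \<in> (\<inter>) X ` sets borel" by blast
  then show ?thesis using \<open>sets \<mu> = _\<close> by (simp add: sets_restrict_space)
qed

lemma funpow_meas: "T \<in> measurable M M \<Longrightarrow> (T ^^ n) \<in> measurable M M"
proof (induction n)
  case 0 then show ?case by (simp add: measurable_ident[unfolded id_def])
next
  case (Suc n)
  then have "T \<circ> (T ^^ n) \<in> measurable M M" by (intro measurable_comp[of _ _ M]) auto
  then show ?case by (simp add: o_def)
qed

lemma iter_inv:
  assumes "invariant_measure X T \<mu>" "T ` X \<subseteq> X" "A \<in> sets \<mu>"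
  shows "emeasure \<mu> ((T ^^ n) -` A \<inter> X) = emeasure \<mu> A"
proof (induction n)
  case 0 then show ?case using sets.sets_into_space[OF assms(3)] inv_space[OF assms(1)] by (simp add: Int_absorb2)
next
  case (Suc n)
  have sp: "space \<mu> = X" using inv_space[OF assms(1)] .
  have Tm: "T \<in> measurable \<mu> \<mu>" and inv: "\<forall>A \<in> sets \<mu>. emeasure \<mu> (T -` A \<inter> space \<mu>) = emeasure \<mu> A"
    using assms(1) unfolding invariant_measure_def by auto
  have Bm: "(T ^^ n) -` A \<inter> X \<in> sets \<mu>"
    using measurable_sets[OF funpow_meas[OF Tm] assms(3)] sp by simp
  have eq: "(T ^^ Suc n) -` A \<inter> X = T -` ((T ^^ n) -` A \<inter> X) \<inter> X"
    using assms(2) by (auto simp: funpow_Suc_right funpow_swap1)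
  have "emeasure \<mu> (T -` ((T ^^ n) -` A \<inter> X) \<inter> space \<mu>) = emeasure \<mu> ((T ^^ n) -` A \<inter> X)"
    using inv Bm by blast
  then show ?case using Suc.IH unfolding eq sp by simp
qed

lemma fix_full:
  fixes X :: "'a::metric_space set"
  assumes "tds X T" "invariant_measure X T \<mu>"
   and unif: "\<forall>e>0. \<forall>l<1. \<exists>N\<ge>1. \<forall>z\<in>X. \<forall>a b. a \<le> b \<and> card {a..b} \<ge> N \<longrightarrow>
     real (card ({n. dist ((T ^^ n) z) ((T ^^ n) ((T ^^ k) z)) < e} \<inter> {a..b})) \<ge> l * real (card {a..b})"
  shows "emeasure \<mu> (Fix X T k) = 1"
proof -
  interpret prob_space \<mu> using assms(2) unfolding invariant_measure_def by auto
  have sp: "space \<mu> = X" using inv_space[OF assms(2)] .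
  have cX: "compact X" and cT: "continuous_on X T" and TX: "T ` X \<subseteq> X"
    using assms(1) unfolding tds_def by auto
  have clX: "closed X" using cX by (rule compact_imp_closed)
  define h where "h z = dist z ((T ^^ k) z)" for z
  have ch: "continuous_on X h" unfolding h_def
    by (intro continuous_on_dist continuous_on_id funpow_cont cT TX)
  define A where "A e = {z\<in>X. e \<le> h z}" for e
  have Asets: "A e \<in> sets \<mu>" for e
  proof -
    have "closedin (top_of_set X) (X \<inter> h -` {e..})"
      by (rule continuous_closedin_preimage[OF ch]) simp
    then have "closed (X \<inter> h -` {e..})" using clX closedin_closed_trans by blast
    moreover have "X \<inter> h -` {e..} = A e" unfolding A_def by auto
    ultimately show ?thesis using closed_in_sets[OF assms(2)] unfolding A_def by auto
  qed
  have null: "measure \<mu> (A e) = 0" if e: "e > 0" for e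
  proof -
    have bound: "measure \<mu> (A e) \<le> 1 - l" if l: "l < 1" for l
    proof -
      obtain N where N: "N \<ge> 1" "\<forall>z\<in>X. \<forall>a b. a \<le> b \<and> card {a..b} \<ge> N \<longrightarrow>
        real (card ({n. dist ((T ^^ n) z) ((T ^^ n) ((T ^^ k) z)) < e} \<inter> {a..b})) \<ge> l * real (card {a..b})"
        using unif e l by blast
      define B where "B n = (T ^^ n) -` A e \<inter> X" for n
      have Bsets: "B n \<in> sets \<mu>" for n
        using measurable_sets[OF funpow_meas Asets] assms(2) sp unfolding B_def invariant_measure_def by auto
      have mB: "measure \<mu> (B n) = measure \<mu> (A e)" for n
        unfolding B_def measure_def using iter_inv[OF assms(2) TX Asets] by simp
      have pw: "(\<Sum>n<N. indicator (B n) z) \<le> (1 - l) * real N" if z: "z \<in> X" for z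
      proof -
        define S where "S = {n. dist ((T ^^ n) z) ((T ^^ n) ((T ^^ k) z)) < e}"
        have cN: "card {0..N-1} = N" using N(1) by simp
        have "0 \<le> N-1 \<and> card {0..N-1} \<ge> N" using cN by simp
        then have "real (card (S \<inter> {0..N-1})) \<ge> l * real (card {0..N-1})"
          using N(2) z unfolding S_def by blast
        then have Sb: "real (card (S \<inter> {0..N-1})) \<ge> l * real N" using cN by simp
        have "(\<Sum>n<N. indicator (B n) z) = (\<Sum>n\<in>{..<N}. (indicator {n. z \<in> B n} n :: real))"
          by (simp add: indicator_def)
        also have "\<dots> = real (\<Sum>x\<in>{..<N}. (indicator {n. z \<in> B n} x :: nat))"
          by (simp add: real_of_nat_indicator)
        also have "\<dots> = real (card ({..<N} \<inter> {n. z \<in> B n}))"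
          by (subst sum_indicator_eq_card) auto
        finally have s1: "(\<Sum>n<N. indicator (B n) z) = real (card ({..<N} \<inter> {n. z \<in> B n}))" .
        have disj: "({..<N} \<inter> {n. z \<in> B n}) \<inter> (S \<inter> {0..N-1}) = {}"
        proof (rule ccontr)
          assume "({..<N} \<inter> {n. z \<in> B n}) \<inter> (S \<inter> {0..N-1}) \<noteq> {}"
          then obtain n where "z \<in> B n" "n \<in> S" by blast
          then have "e \<le> dist ((T ^^ n) z) ((T ^^ k) ((T ^^ n) z))"
                    "dist ((T ^^ n) z) ((T ^^ n) ((T ^^ k) z)) < e"
            unfolding B_def A_def h_def S_def by auto
          then show False by (simp add: funpow_comp' add.commute)
        qed
        have "card (({..<N} \<inter> {n. z \<in> B n}) \<union> (S \<inter> {0..N-1})) \<le> card {..<N}"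
          by (rule card_mono) (use N(1) in auto)
        moreover have "card (({..<N} \<inter> {n. z \<in> B n}) \<union> (S \<inter> {0..N-1})) = card ({..<N} \<inter> {n. z \<in> B n}) + card (S \<inter> {0..N-1})"
          by (rule card_Un_disjoint) (use disj in auto)
        ultimately have "card ({..<N} \<inter> {n. z \<in> B n}) + card (S \<inter> {0..N-1}) \<le> N" by simp
        then have "real (card ({..<N} \<inter> {n. z \<in> B n})) + real (card (S \<inter> {0..N-1})) \<le> real N"
          by (metis of_nat_add of_nat_le_iff)
        then show ?thesis using s1 Sb by (simp add: algebra_simps)
      qed
      have BX: "B n \<inter> X = B n" for n unfolding B_def by auto
      have intg: "integrable \<mu> (indicator (B n) :: 'a \<Rightarrow> real)" for n
        using Bsets by (simp add: integrable_indicator_iff sp BX less_top[symmetric])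
      have "real N * measure \<mu> (A e) = (\<Sum>n<N. measure \<mu> (B n))" using mB by simp
      also have "\<dots> = (\<Sum>n<N. integral\<^sup>L \<mu> (indicator (B n)))"
        using Bsets sp by (simp add: BX)
      also have "\<dots> = integral\<^sup>L \<mu> (\<lambda>z. \<Sum>n<N. indicator (B n) z)"
        using Bochner_Integration.integral_sum[where I="{..<N}" and M=\<mu> and f="\<lambda>n. indicator (B n)"] intg by simp
      also have "\<dots> \<le> integral\<^sup>L \<mu> (\<lambda>z. (1 - l) * real N)"
        by (rule integral_mono) (use intg pw sp in auto)
      also have "\<dots> = (1 - l) * real N" using prob_space by simp
      finally have "real N * measure \<mu> (A e) \<le> real N * (1 - l)" by (simp add: algebra_simps)
      then show ?thesis using N(1) by simp
    qed
    show ?thesis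
    proof (rule ccontr)
      assume "measure \<mu> (A e) \<noteq> 0"
      then have "measure \<mu> (A e) > 0" using measure_nonneg[of \<mu> "A e"] by linarith
      then show False using bound[of "1 - measure \<mu> (A e) / 2"] by simp
    qed
  qed
  have eqU: "X - Fix X T k = (\<Union>j. A (inverse (real (Suc j))))"
  proof (rule set_eqI, rule iffI)
    fix z assume z: "z \<in> X - Fix X T k"
    then have "h z > 0" unfolding h_def Fix_def by auto
    then obtain j where "inverse (real (Suc j)) < h z" using reals_Archimedean by blast
    then show "z \<in> (\<Union>j. A (inverse (real (Suc j))))" using z unfolding A_def by (auto intro!: exI[of _ j])
  next
    fix z assume "z \<in> (\<Union>j. A (inverse (real (Suc j))))"
    then obtain j where "z \<in> X" "inverse (real (Suc j)) \<le> h z" unfolding A_def by auto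
    moreover have "inverse (real (Suc j)) > 0" by simp
    ultimately show "z \<in> X - Fix X T k" unfolding h_def Fix_def by auto
  qed
  have "emeasure \<mu> (\<Union>j. A (inverse (real (Suc j)))) = 0"
    by (rule emeasure_UN_eq_0) (use null Asets emeasure_eq_measure in auto)
  then have z0: "emeasure \<mu> (X - Fix X T k) = 0" using eqU by simp
  have "(\<Union>j\<in>UNIV. A (inverse (real (Suc j)))) \<in> sets \<mu>"
    by (rule sets.countable_UN) (use Asets in blast)
  then have "X - Fix X T k \<in> sets \<mu>" using eqU by simp
  then have "emeasure \<mu> (space \<mu> - (X - Fix X T k)) = emeasure \<mu> (space \<mu>) - emeasure \<mu> (X - Fix X T k)"
    by (rule emeasure_compl) simp
  moreover have "space \<mu> - (X - Fix X T k) = Fix X T k" using sp unfolding Fix_def by auto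
  ultimately show ?thesis using z0 emeasure_space_1 by simp
qed

lemma funpow_periodic:
  assumes "(T ^^ k) p = p"
  shows "(T ^^ (k * j + r)) p = (T ^^ r) p"
proof (induction j)
  case 0 then show ?case by simp
next
  case (Suc j)
  have "(T ^^ (k * Suc j + r)) p = (T ^^ (k * j + r)) ((T ^^ k) p)"
    by (simp add: funpow_comp' algebra_simps)
  then show ?case using assms Suc by simp
qed

lemma funpow_mod:
  assumes "(T ^^ k) p = p"
  shows "(T ^^ (i mod k)) p = (T ^^ i) p"
  using funpow_periodic[OF assms, of "i div k" "i mod k"] by simp

lemma periodic_in_supp:
  fixes X :: "'a::metric_space set"
  assumes "tds X T" "p \<in> X" "(T ^^ k) p = p" "k \<ge> 1"
  shows "p \<in> supp X T"
proof -
  have cT: "continuous_on X T" and TX: "T ` X \<subseteq> X"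
    using assms(1) unfolding tds_def by auto
  define q where "q = pmf_of_set {..<k}"
  define g where "g i = (T ^^ i) p" for i
  define \<mu> where "\<mu> = distr (measure_pmf q) (restrict_space borel X) g"
  have "0 \<in> {..<k}" using assms(4) by simp
  then have ne: "{..<k} \<noteq> {}" by blast
  have gm: "g \<in> measurable (measure_pmf q) (restrict_space borel X)"
    using funpow_in[OF TX assms(2)] unfolding g_def by (simp add: space_restrict_space)
  have sets\<mu>: "sets \<mu> = sets (restrict_space borel X)" unfolding \<mu>_def by simp
  have TmX: "T \<in> measurable (restrict_space borel X) (restrict_space borel X)"
    by (rule measurable_restrict_space2) (use TX borel_measurable_continuous_on_restrict[OF cT] in \<open>auto simp: space_restrict_space\<close>)
  have Tm: "T \<in> measurable \<mu> \<mu>"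
    using TmX by (simp add: measurable_cong_sets[OF sets\<mu> sets\<mu>])
  have sp: "space \<mu> = X" unfolding \<mu>_def by (simp add: space_restrict_space)
  define f where "f i = Suc i mod k" for i
  have finj: "inj_on f {..<k}" unfolding f_def inj_on_def
  proof (intro ballI impI)
    fix i j assume ij: "i \<in> {..<k}" "j \<in> {..<k}" "Suc i mod k = Suc j mod k"
    show "i = j"
    proof (cases "Suc i < k")
      case True
      then show ?thesis using ij by (cases "Suc j < k") (auto simp: mod_if)
    next
      case False
      then show ?thesis using ij by (cases "Suc j < k") (auto simp: mod_if)
    qed
  qed
  have fimg: "f ` {..<k} = {..<k}"
  proof
    show "f ` {..<k} \<subseteq> {..<k}" unfolding f_def using assms(4) by auto
    show "{..<k} \<subseteq> f ` {..<k}"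
    proof
      fix j assume j: "j \<in> {..<k}"
      show "j \<in> f ` {..<k}"
      proof (cases "j = 0")
        case True
        then show ?thesis using assms(4) unfolding f_def by (intro image_eqI[of _ _ "k - 1"]) auto
      next
        case False
        then show ?thesis using j unfolding f_def by (intro image_eqI[of _ _ "j - 1"]) auto
      qed
    qed
  qed
  have mapq: "map_pmf f q = q" unfolding q_def
    using map_pmf_of_set_inj[OF finj ne] fimg by simp
  have gf: "g (f i) = T (g i)" for i
    unfolding g_def f_def using funpow_mod[OF assms(3), of "Suc i"] by simp
  have inv: "invariant_measure X T \<mu>"
    unfolding invariant_measure_def
  proof (intro conjI ballI)
    show "prob_space \<mu>" unfolding \<mu>_def
      by (rule prob_space.prob_space_distr[OF prob_space_measure_pmf gm])
    show "sets \<mu> = sets (restrict_space borel X)" by (rule sets\<mu>)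
    show "T \<in> measurable \<mu> \<mu>" by (rule Tm)
    fix A assume A: "A \<in> sets \<mu>"
    have A': "A \<in> sets (restrict_space borel X)" using A sets\<mu> by simp
    have TA: "T -` A \<inter> X \<in> sets (restrict_space borel X)"
      using measurable_sets[OF TmX A'] by (simp add: space_restrict_space)
    have "emeasure \<mu> (T -` A \<inter> space \<mu>) = emeasure (measure_pmf q) (g -` (T -` A \<inter> X))"
      unfolding sp unfolding \<mu>_def using emeasure_distr[OF gm TA] by simp
    also have "g -` (T -` A \<inter> X) = f -` (g -` A)"
      using funpow_in[OF TX assms(2)] gf unfolding g_def by auto
    also have "emeasure (measure_pmf q) (f -` (g -` A)) = emeasure (measure_pmf (map_pmf f q)) (g -` A)"
      by simp
    also have "\<dots> = emeasure \<mu> A"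
      unfolding mapq \<mu>_def using emeasure_distr[OF gm A'] by simp
    finally show "emeasure \<mu> (T -` A \<inter> space \<mu>) = emeasure \<mu> A" .
  qed
  show ?thesis unfolding supp_def
  proof (rule InterI)
    fix C assume "C \<in> {C. closed C \<and> C \<subseteq> X \<and> (\<forall>\<mu>. invariant_measure X T \<mu> \<longrightarrow> emeasure \<mu> C = 1)}"
    then have C: "closed C" "C \<subseteq> X" "emeasure \<mu> C = 1" using inv by auto
    have Cs: "C \<in> sets (restrict_space borel X)" using closed_in_sets[OF inv C(1,2)] sets\<mu> by simp
    have "emeasure (measure_pmf q) (g -` C) = 1"
      using C(3) unfolding \<mu>_def using emeasure_distr[OF gm Cs] by simp
    then have "measure (measure_pmf q) (g -` C) = 1"
      by (simp add: measure_pmf.emeasure_eq_measure)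
    then have "AE i in measure_pmf q. i \<in> g -` C"
      by (subst (asm) measure_pmf.prob_eq_1) auto
    then have "\<forall>i\<in>set_pmf q. g i \<in> C" by (simp add: AE_measure_pmf_iff)
    moreover have "0 \<in> set_pmf q" unfolding q_def using ne assms(4) by simp
    ultimately show "p \<in> C" unfolding g_def by force
  qed
qed

theorem mainTheorem13:
  fixes X :: "'a::metric_space set" and T :: "'a \<Rightarrow> 'a"
  assumes "tds X T"
    and "transitive_sys X T"
    and "\<forall>n::nat. n \<ge> 1 \<longrightarrow> supp X T \<noteq> Fix X T n"
  shows "\<forall>x \<in> X. \<forall>U. openin (top_of_set X) U \<and> U \<subseteq> BP X T x \<longrightarrow> U = {}"
proof (intro ballI allI impI)
  fix x U assume x: "x \<in> X" and hU: "openin (top_of_set X) U \<and> U \<subseteq> BP X T x"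
  show "U = {}"
  proof (rule ccontr)
    assume Une: "U \<noteq> {}"
    have cX: "compact X" and cT: "continuous_on X T" and TX: "T ` X \<subseteq> X"
      using assms(1) unfolding tds_def by auto
    have "infinite {n::nat. U \<inter> {y \<in> X. (T ^^ n) y \<in> U} \<noteq> {}}"
      using assms(2) hU Une unfolding transitive_sys_def by blast
    then obtain k where k0: "k > 0" and kU: "U \<inter> {y \<in> X. (T ^^ k) y \<in> U} \<noteq> {}"
      unfolding infinite_nat_iff_unbounded by blast
    have k: "k \<ge> 1" using k0 by simp
    define W where "W = U \<inter> (X \<inter> (T ^^ k) -` U)"
    have opW: "openin (top_of_set X) W" unfolding W_def
    proof (rule openin_Int)
      show "openin (top_of_set X) U" using hU by blast
      show "openin (top_of_set X) (X \<inter> (T ^^ k) -` U)"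
        by (rule continuous_openin_preimage[OF funpow_cont[OF cT TX], where T=X]) (use funpow_in[OF TX] hU in auto)
    qed
    have Wne: "W \<noteq> {}" using kU unfolding W_def by blast
    obtain w where w: "w \<in> W" and dense: "\<forall>z\<in>X. \<forall>d>0. \<exists>n. dist ((T ^^ n) w) z < d"
      using dense_orbit[OF assms(1,2) opW Wne] by blast
    have wX: "w \<in> X" and wU: "w \<in> U" and wkU: "(T ^^ k) w \<in> U" using w unfolding W_def by auto
    have "banach_proximal T x w" "banach_proximal T x ((T ^^ k) w)"
      using hU wU wkU unfolding BP_def by auto
    then have bp: "banach_proximal T w ((T ^^ k) w)" by (rule bp_trans)
    have unif: "\<forall>e>0. \<forall>l<1. \<exists>N\<ge>1. \<forall>z\<in>X. \<forall>a b. a \<le> b \<and> card {a..b} \<ge> N \<longrightarrow>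
      real (card ({n. dist ((T ^^ n) z) ((T ^^ n) ((T ^^ k) z)) < e} \<inter> {a..b})) \<ge> l * real (card {a..b})"
      using uniform_bp[OF assms(1) wX dense bp] by blast
    have clF: "closed (Fix X T k)"
    proof -
      have "closedin (top_of_set X) (X \<inter> (\<lambda>z. dist z ((T ^^ k) z)) -` {0})"
        by (rule continuous_closedin_preimage)
          (auto intro!: continuous_on_dist continuous_on_id funpow_cont cT TX)
      then have "closed (X \<inter> (\<lambda>z. dist z ((T ^^ k) z)) -` {0})"
        using compact_imp_closed[OF cX] closedin_closed_trans by blast
      moreover have "X \<inter> (\<lambda>z. dist z ((T ^^ k) z)) -` {0} = Fix X T k"
        unfolding Fix_def by auto
      ultimately show ?thesis by simp
    qed
    have sub1: "supp X T \<subseteq> Fix X T k"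
      unfolding supp_def
      by (rule Inter_lower) (use clF fix_full[OF assms(1) _ unif] in \<open>auto simp: Fix_def\<close>)
    have sub2: "Fix X T k \<subseteq> supp X T"
      using periodic_in_supp[OF assms(1) _ _ k] unfolding Fix_def by blast
    have "supp X T = Fix X T k" using sub1 sub2 by blast
    then show False using assms(3) k by blast
  qed
qed

end
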